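(* Let $R$ be a commutative ring, $\underline{x}=x_1,\ldots,x_r$ a sequence of elements of $R$, $\underline{U}=U_1,\ldots,U_r$ variables over $R$, and $X$ an arbitrary $R$-complex. Then there is an isomorphism of $R$-complexes \[ \operatorname{Hom}_R(\mathcal{L}_{\underline{x}},X)\cong K_\bullet(\underline{x}-\underline{U};X[[\underline{U}]]), \] where the right-hand side is the Koszul complex of the sequence $\underline{x}-\underline{U}=x_1-U_1,\ldots,x_r-U_r$ in $R[\underline{U}]$ with respect to the $R[\underline{U}]$-complex $X[[\underline{U}]]$.
   Context: For $x\in R$ and a variable $U$, $\mathcal{L}_x$ denotes the $R$-complex $0\to R[U]\xrightarrow{\psi} UR[U]\to 0$, with $R[U]$ in cohomological degree $0$ and $UR[U]$ (the $R$-submodule of polynomials without constant term) in cohomological degree $1$, where $\psi(r(U))=r(0)-(1-xU)\,r(U)$. For $\underline{x}=x_1,\ldots,x_r$ put $\mathcal{L}_{\underline{x}}=\mathcal{L}_{x_1}\otimes_R\cdots\otimes_R\mathcal{L}_{x_r}$, where $\mathcal{L}_{x_i}$ is formed with the variable $U_i$. $\operatorname{Hom}_R(-,-)$ denotes the total Hom complex. For an $R$-complex $X$, $X[[\underline{U}]]$ is the complex whose $i$-th term is $\operatorname{Hom}_R(R[\underline{U}],X^i)$, identified with the module of formal power series $\sum_{\alpha\in\mathbb{N}^r}m_\alpha\underline{U}^\alpha$ with $m_\alpha\in X^i$, with differential applied coefficientwise; it is an $R[\underline{U}]$-complex via multiplication of power series. Koszul complexes: for a commutative ring $S$, a sequence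 $\underline{t}=t_1,\ldots,t_r$ in $S$ and an $S$-complex $Y$, $K_\bullet(\underline{t};S)$ is the usual Koszul complex (exterior algebra on $S^r$ with differential induced by $e_i\mapsto t_i$, in homological degrees $0,\ldots,r$), $K_\bullet(\underline{t};Y)=K_\bullet(\underline{t};S)\otimes_S Y$, $K^\bullet(\underline{t};Y)=\operatorname{Hom}_S(K_\bullet(\underline{t};S),Y)$; their (co)homology is denoted $H_i(\underline{t};Y)$ resp. $H^i(\underline{t};Y)$. *)

theory Defs
  imports Main "HOL-Library.Function_Algebras"
begin

text \<open>An R-complex (R a commutative ring, given as a type of class comm_ring_1) is
represented by: the modules X^i (i :: int) as subsets carr i of one ambient abelian
group 'm (every family of modules embeds in its direct sum, so this is no loss of
generality), an R-action smul on 'm, and differentials diff i : X^i -> X^(i+1)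
(cohomological grading).\<close>

record ('r, 'm) cpx =
  carr :: "int \<Rightarrow> 'm set"
  smul :: "'r \<Rightarrow> 'm \<Rightarrow> 'm"
  diff :: "int \<Rightarrow> 'm \<Rightarrow> 'm"

definition is_complex :: "('r::comm_ring_1, 'm::ab_group_add) cpx \<Rightarrow> bool" where
  "is_complex X \<longleftrightarrow>
    (\<forall>n. 0 \<in> carr X n
       \<and> (\<forall>a\<in>carr X n. \<forall>b\<in>carr X n. a + b \<in> carr X n)
       \<and> (\<forall>a\<in>carr X n. - a \<in> carr X n)
       \<and> (\<forall>c. \<forall>a\<in>carr X n. smul X c a \<in> carr X n)
       \<and> (\<forall>c d. \<forall>a\<in>carr X n. smul X (c + d) a = smul X c a + smul X d a)
       \<and> (\<forall>c. \<forall>a\<in>carr X n. \<forall>b\<in>carr X n. smul X c (a + b) = smul X c a + smul X c b)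
       \<and> (\<forall>c d. \<forall>a\<in>carr X n. smul X (c * d) a = smul X c (smul X d a))
       \<and> (\<forall>a\<in>carr X n. smul X 1 a = a)
       \<and> (\<forall>a\<in>carr X n. diff X n a \<in> carr X (n + 1))
       \<and> (\<forall>a\<in>carr X n. \<forall>b\<in>carr X n. diff X n (a + b) = diff X n a + diff X n b)
       \<and> (\<forall>c. \<forall>a\<in>carr X n. diff X n (smul X c a) = smul X c (diff X n a))
       \<and> (\<forall>a\<in>carr X n. diff X (n + 1) (diff X n a) = 0))"

definition cpx_iso :: "('r, 'm::ab_group_add) cpx \<Rightarrow> ('r, 'n::ab_group_add) cpx \<Rightarrow> bool" where
  "cpx_iso X Y \<longleftrightarrow>
    (\<exists>F :: int \<Rightarrow> 'm \<Rightarrow> 'n. \<forall>n.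
        bij_betw (F n) (carr X n) (carr Y n)
      \<and> (\<forall>a\<in>carr X n. \<forall>b\<in>carr X n. F n (a + b) = F n a + F n b)
      \<and> (\<forall>c. \<forall>a\<in>carr X n. F n (smul X c a) = smul Y c (F n a))
      \<and> (\<forall>a\<in>carr X n. F (n + 1) (diff X n a) = diff Y n (F n a)))"

definition sg :: "nat \<Rightarrow> 'b::ab_group_add \<Rightarrow> 'b" where
  "sg k y = (if even k then y else - y)"

text \<open>Exponent vectors are functions alpha :: nat => nat supported in {..<r}.
A polynomial (resp. power series) with coefficients in 'b is a coefficient function
(nat => nat) => 'b vanishing outside such exponent vectors (finitely supported for
polynomials).\<close>

definition expvec :: "nat \<Rightarrow> (nat \<Rightarrow> nat) \<Rightarrow> bool" where
  "expvec r \<alpha> \<longleftrightarrow> (\<forall>k\<ge>r. \<alpha> k = 0)"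

text \<open>Multiplication by the variable U_i.\<close>
definition mulU :: "nat \<Rightarrow> ((nat \<Rightarrow> nat) \<Rightarrow> 'b::zero) \<Rightarrow> (nat \<Rightarrow> nat) \<Rightarrow> 'b" where
  "mulU i f \<alpha> = (if \<alpha> i = 0 then 0 else f (\<alpha>(i := \<alpha> i - 1)))"

text \<open>Setting U_i := 0.\<close>
definition atzero :: "nat \<Rightarrow> ((nat \<Rightarrow> nat) \<Rightarrow> 'b::zero) \<Rightarrow> (nat \<Rightarrow> nat) \<Rightarrow> 'b" where
  "atzero i f \<alpha> = (if \<alpha> i = 0 then f \<alpha> else 0)"

definition psi :: "'a::comm_ring_1 \<Rightarrow> nat \<Rightarrow> ((nat \<Rightarrow> nat) \<Rightarrow> 'a) \<Rightarrow> (nat \<Rightarrow> nat) \<Rightarrow> 'a" where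
  "psi xi i q = atzero i q - (q - (\<lambda>\<alpha>. xi * mulU i q \<alpha>))"

text \<open>L_x = L_{x_1} (x) ... (x) L_{x_r}, with R[U_1] (x) ... (x) R[U_r] identified with
R[U_1,...,U_r]. Its degree-p component is the direct sum over subsets S of {..<r}
with |S| = p of the R-modules (prod_{i in S} U_i) R[U]; an element is a function
S => polynomial.\<close>

definition Lcarr :: "nat \<Rightarrow> int \<Rightarrow> (nat set \<Rightarrow> (nat \<Rightarrow> nat) \<Rightarrow> 'a::comm_ring_1) set" where
  "Lcarr r p = {g. \<forall>S.
      (g S \<noteq> 0 \<longrightarrow> S \<subseteq> {..<r} \<and> int (card S) = p)
    \<and> finite {\<alpha>. g S \<alpha> \<noteq> 0}
    \<and> (\<forall>\<alpha>. g S \<alpha> \<noteq> 0 \<longrightarrow> expvec r \<alpha> \<and> (\<forall>i\<in>S. 1 \<le> \<alpha> i))}"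

text \<open>Tensor product differential (Koszul sign rule).\<close>
definition Ldiff :: "nat \<Rightarrow> (nat \<Rightarrow> 'a::comm_ring_1) \<Rightarrow> (nat set \<Rightarrow> (nat \<Rightarrow> nat) \<Rightarrow> 'a)
    \<Rightarrow> nat set \<Rightarrow> (nat \<Rightarrow> nat) \<Rightarrow> 'a" where
  "Ldiff r x g T = (if T \<subseteq> {..<r} then
      (\<Sum>i\<in>T. sg (card {j\<in>T. j < i}) (psi (x i) i (g (T - {i}))))
    else 0)"

text \<open>Hom_R(L,X)^n = prod_p Hom_R(L^p, X^(p+n)); an element is a family phi p of
R-linear maps L^p -> X^(p+n) (extended by 0 outside L^p); differential
d(phi) = d_X o phi - (-1)^n phi o d_L.\<close>

definition HomL :: "nat \<Rightarrow> (nat \<Rightarrow> 'a::comm_ring_1) \<Rightarrow> ('a, 'm::ab_group_add) cpx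
    \<Rightarrow> ('a, int \<Rightarrow> (nat set \<Rightarrow> (nat \<Rightarrow> nat) \<Rightarrow> 'a) \<Rightarrow> 'm) cpx" where
  "HomL r x X =
    \<lparr> carr = (\<lambda>n. {\<phi>. \<forall>p.
          (\<forall>g\<in>Lcarr r p. \<phi> p g \<in> carr X (p + n))
        \<and> (\<forall>g. g \<notin> Lcarr r p \<longrightarrow> \<phi> p g = 0)
        \<and> (\<forall>g\<in>Lcarr r p. \<forall>g'\<in>Lcarr r p. \<phi> p (g + g') = \<phi> p g + \<phi> p g')
        \<and> (\<forall>c. \<forall>g\<in>Lcarr r p. \<phi> p (\<lambda>S \<alpha>. c * g S \<alpha>) = smul X c (\<phi> p g))}),
      smul = (\<lambda>c \<phi> p g. smul X c (\<phi> p g)),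
      diff = (\<lambda>n \<phi> p g. if g \<in> Lcarr r p then
                 diff X (p + n) (\<phi> p g) - (if even n then \<phi> (p + 1) (Ldiff r x g) else - \<phi> (p + 1) (Ldiff r x g))
               else 0) \<rparr>"

definition mulT :: "('a, 'm::ab_group_add) cpx \<Rightarrow> 'a \<Rightarrow> nat
    \<Rightarrow> ((nat \<Rightarrow> nat) \<Rightarrow> 'm) \<Rightarrow> (nat \<Rightarrow> nat) \<Rightarrow> 'm" where
  "mulT X xi i f = (\<lambda>\<alpha>. smul X xi (f \<alpha>)) - mulU i f"

text \<open>K_k(x-U; R[U]) is free on e_S, S subset of {..<r}, |S| = k (homological
degree k = cohomological degree -k). The total complex of K_.(x-U;R[U]) (x)_{R[U]} X[[U]]
in cohomological degree n is the direct sum over S of X^(n+|S|)[[U]] e_S; an element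
is a function S => power series. Differential:
d(e_S (x) y) = d_K(e_S) (x) y + (-1)^|S| e_S (x) d_X y.\<close>

definition KosX :: "nat \<Rightarrow> (nat \<Rightarrow> 'a::comm_ring_1) \<Rightarrow> ('a, 'm::ab_group_add) cpx
    \<Rightarrow> ('a, nat set \<Rightarrow> (nat \<Rightarrow> nat) \<Rightarrow> 'm) cpx" where
  "KosX r x X =
    \<lparr> carr = (\<lambda>n. {h. \<forall>S \<alpha>.
          if S \<subseteq> {..<r} \<and> expvec r \<alpha> then h S \<alpha> \<in> carr X (n + int (card S))
          else h S \<alpha> = 0}),
      smul = (\<lambda>c h S \<alpha>. smul X c (h S \<alpha>)),
      diff = (\<lambda>n h T. if T \<subseteq> {..<r} then
                 (\<Sum>i\<in>{..<r} - T. sg (card {j\<in>T. j < i}) (mulT X (x i) i (h (insert i T))))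
               + sg (card T) (\<lambda>\<alpha>. if expvec r \<alpha> then diff X (n + int (card T)) (h T \<alpha>) else 0)
               else 0) \<rparr>"

end

theory Submission
  imports Defs
begin


lemma sum_fun_apply: "(\<Sum>i\<in>I. f i) y = (\<Sum>i\<in>I. f i y)"
  by (induction I rule: infinite_finite_induct) auto

context fixes X :: "('a::comm_ring_1, 'm::ab_group_add) cpx" assumes cX: "is_complex X"
begin
lemma c0: "0 \<in> carr X n" using cX unfolding is_complex_def by metis
lemma cadd: "a\<in>carr X n \<Longrightarrow> b\<in>carr X n \<Longrightarrow> a+b \<in> carr X n" using cX unfolding is_complex_def by metis
lemma cneg: "a\<in>carr X n \<Longrightarrow> -a \<in> carr X n" using cX unfolding is_complex_def by metis
lemma csmul: "a\<in>carr X n \<Longrightarrow> smul X c a \<in> carr X n" using cX unfolding is_complex_def by metis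
lemma sadd1: "a\<in>carr X n \<Longrightarrow> smul X (c+d) a = smul X c a + smul X d a" using cX unfolding is_complex_def by metis
lemma sadd2: "a\<in>carr X n \<Longrightarrow> b\<in>carr X n \<Longrightarrow> smul X c (a+b) = smul X c a + smul X c b" using cX unfolding is_complex_def by metis
lemma smult: "a\<in>carr X n \<Longrightarrow> smul X (c*d) a = smul X c (smul X d a)" using cX unfolding is_complex_def by metis
lemma sone: "a\<in>carr X n \<Longrightarrow> smul X 1 a = a" using cX unfolding is_complex_def by metis
lemma cdiff: "a\<in>carr X n \<Longrightarrow> diff X n a \<in> carr X (n+1)" using cX unfolding is_complex_def by metis
lemma dadd: "a\<in>carr X n \<Longrightarrow> b\<in>carr X n \<Longrightarrow> diff X n (a+b) = diff X n a + diff X n b" using cX unfolding is_complex_def by metis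

lemma dsmul: "a\<in>carr X n \<Longrightarrow> diff X n (smul X c a) = smul X c (diff X n a)" using cX unfolding is_complex_def by metis
lemma csub: "a\<in>carr X n \<Longrightarrow> b\<in>carr X n \<Longrightarrow> a-b \<in> carr X n"
  using cadd cneg by (metis diff_conv_add_uminus)
lemma szero: "smul X c 0 = 0"
proof -
  have "smul X c (0+0) = smul X c 0 + smul X c 0" using sadd2 c0 by blast
  then show ?thesis by simp
qed
lemma szerol: "a\<in>carr X n \<Longrightarrow> smul X 0 a = 0"
proof -
  assume a: "a\<in>carr X n"
  have "smul X (0+0) a = smul X 0 a + smul X 0 a" using sadd1 a by blast
  then show ?thesis by simp
qed
lemma sneg: "a\<in>carr X n \<Longrightarrow> smul X c (-a) = - smul X c a"
proof -
  assume a: "a\<in>carr X n"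
  have "smul X c (a + -a) = smul X c a + smul X c (-a)" using sadd2 a cneg by blast
  then show ?thesis using szero by (simp add: eq_neg_iff_add_eq_0 add.commute)
qed
lemma snegc: "a\<in>carr X n \<Longrightarrow> smul X (-c) a = - smul X c a"
proof -
  assume a: "a\<in>carr X n"
  have "smul X (c + -c) a = smul X c a + smul X (-c) a" using sadd1 a by blast
  then show ?thesis using szerol[OF a] by (simp add: eq_neg_iff_add_eq_0 add.commute)
qed
lemma dzero: "diff X n 0 = 0"
proof -
  have "diff X n (0+0) = diff X n 0 + diff X n 0" using dadd c0 by blast
  then show ?thesis by simp
qed
lemma dneg: "a\<in>carr X n \<Longrightarrow> diff X n (-a) = - diff X n a"
proof -
  assume a: "a\<in>carr X n"
  have "diff X n (a + -a) = diff X n a + diff X n (-a)" using dadd a cneg by blast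
  then show ?thesis using dzero by (simp add: eq_neg_iff_add_eq_0 add.commute)
qed
lemma dsub: "a\<in>carr X n \<Longrightarrow> b\<in>carr X n \<Longrightarrow> diff X n (a-b) = diff X n a - diff X n b"
  using dadd dneg cneg by (metis diff_conv_add_uminus)
lemma csum: "finite A \<Longrightarrow> (\<And>i. i\<in>A \<Longrightarrow> f i \<in> carr X n) \<Longrightarrow> sum f A \<in> carr X n"
  by (induction A rule: finite_induct) (auto intro: cadd c0)
lemma ssum: "finite A \<Longrightarrow> (\<And>i. i\<in>A \<Longrightarrow> f i \<in> carr X n) \<Longrightarrow> smul X c (sum f A) = (\<Sum>i\<in>A. smul X c (f i))"
proof (induction A rule: finite_induct)
  case empty then show ?case by (simp add: szero)
next
  case (insert a A)
  have "smul X c (f a + sum f A) = smul X c (f a) + smul X c (sum f A)"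
    using insert by (intro sadd2) (auto intro: csum)
  then show ?case using insert by simp
qed
end


definition mnm :: "nat set \<Rightarrow> (nat\<Rightarrow>nat) \<Rightarrow> nat set \<Rightarrow> (nat\<Rightarrow>nat) \<Rightarrow> 'a::comm_ring_1" where
 "mnm T \<beta> = (\<lambda>S \<gamma>. if S = T \<and> \<gamma> = \<beta> then 1 else 0)"
definition scl :: "'a::comm_ring_1 \<Rightarrow> (nat set \<Rightarrow> (nat\<Rightarrow>nat) \<Rightarrow> 'a) \<Rightarrow> nat set \<Rightarrow> (nat\<Rightarrow>nat) \<Rightarrow> 'a" where
 "scl c g = (\<lambda>S \<gamma>. c * g S \<gamma>)"
definition Sset :: "nat \<Rightarrow> int \<Rightarrow> nat set set" where "Sset r p = {S. S \<subseteq> {..<r} \<and> int (card S) = p}"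
definition supp :: "((nat\<Rightarrow>nat) \<Rightarrow> 'a::zero) \<Rightarrow> (nat\<Rightarrow>nat) set" where "supp f = {\<beta>. f \<beta> \<noteq> 0}"

lemma finite_Sset: "finite (Sset r p)"
  unfolding Sset_def by (rule finite_subset[of _ "Pow {..<r}"]) auto

lemma Lcarr_zero: "0 \<in> Lcarr r p" unfolding Lcarr_def by simp

lemma LcarrD:
  assumes "g \<in> Lcarr r p"
  shows "g S \<noteq> 0 \<Longrightarrow> S \<subseteq> {..<r}" "g S \<noteq> 0 \<Longrightarrow> int (card S) = p"
    "finite {\<alpha>. g S \<alpha> \<noteq> 0}" "g S \<alpha> \<noteq> 0 \<Longrightarrow> expvec r \<alpha>"
    "g S \<alpha> \<noteq> 0 \<Longrightarrow> i \<in> S \<Longrightarrow> 1 \<le> \<alpha> i"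
  using assms unfolding Lcarr_def by auto

lemma LcarrI:
  assumes "\<And>S. g S \<noteq> 0 \<Longrightarrow> S \<subseteq> {..<r}" "\<And>S. g S \<noteq> 0 \<Longrightarrow> int (card S) = p"
    "\<And>S. finite {\<alpha>. g S \<alpha> \<noteq> 0}" "\<And>S \<alpha>. g S \<alpha> \<noteq> 0 \<Longrightarrow> expvec r \<alpha>"
    "\<And>S \<alpha> i. g S \<alpha> \<noteq> 0 \<Longrightarrow> i \<in> S \<Longrightarrow> 1 \<le> \<alpha> i"
  shows "g \<in> Lcarr r p"
  using assms unfolding Lcarr_def by auto

lemma Lcarr_add: "g \<in> Lcarr r p \<Longrightarrow> g' \<in> Lcarr r p \<Longrightarrow> g + g' \<in> Lcarr r p"
proof -
  assume a: "g \<in> Lcarr r p" "g' \<in> Lcarr r p"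
  have nz: "(g + g') S \<noteq> 0 \<Longrightarrow> g S \<noteq> 0 \<or> g' S \<noteq> 0" for S by auto
  have nz2: "(g + g') S \<alpha> \<noteq> 0 \<Longrightarrow> g S \<alpha> \<noteq> 0 \<or> g' S \<alpha> \<noteq> 0" for S \<alpha> by auto
  have sub: "{\<alpha>. (g + g') S \<alpha> \<noteq> 0} \<subseteq> {\<alpha>. g S \<alpha> \<noteq> 0} \<union> {\<alpha>. g' S \<alpha> \<noteq> 0}" for S by auto
  show ?thesis
    apply (rule LcarrI)
    using nz LcarrD(1)[OF a(1)] LcarrD(1)[OF a(2)] apply blast
    using nz LcarrD(2)[OF a(1)] LcarrD(2)[OF a(2)] apply blast
    using sub LcarrD(3)[OF a(1)] LcarrD(3)[OF a(2)] apply (meson finite_Un finite_subset)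
    using nz2 LcarrD(4)[OF a(1)] LcarrD(4)[OF a(2)] apply blast
    using nz2 LcarrD(5)[OF a(1)] LcarrD(5)[OF a(2)] apply blast
    done
qed

lemma Lcarr_scl: "g \<in> Lcarr r p \<Longrightarrow> scl c g \<in> Lcarr r p"
proof -
  assume a: "g \<in> Lcarr r p"
  have nz: "scl c g S \<noteq> 0 \<Longrightarrow> g S \<noteq> 0" for S unfolding scl_def by auto
  have nz2: "scl c g S \<alpha> \<noteq> 0 \<Longrightarrow> g S \<alpha> \<noteq> 0" for S \<alpha> unfolding scl_def by auto
  have sub: "{\<alpha>. scl c g S \<alpha> \<noteq> 0} \<subseteq> {\<alpha>. g S \<alpha> \<noteq> 0}" for S using nz2 by auto
  show ?thesis
    apply (rule LcarrI)
    using nz LcarrD(1)[OF a] apply blast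
    using nz LcarrD(2)[OF a] apply blast
    using sub LcarrD(3)[OF a] apply (meson finite_subset)
    using nz2 LcarrD(4)[OF a] apply blast
    using nz2 LcarrD(5)[OF a] apply blast
    done
qed

lemma Lcarr_sum: "finite I \<Longrightarrow> (\<And>i. i\<in>I \<Longrightarrow> g i \<in> Lcarr r p) \<Longrightarrow> (\<Sum>i\<in>I. g i) \<in> Lcarr r p"
  by (induction I rule: finite_induct) (auto intro: Lcarr_zero Lcarr_add)

lemma Lcarr_mnm: "S \<subseteq> {..<r} \<Longrightarrow> expvec r \<beta> \<Longrightarrow> (\<forall>i\<in>S. 1 \<le> \<beta> i) \<Longrightarrow> int (card S) = p
   \<Longrightarrow> mnm S \<beta> \<in> Lcarr r p"
proof -
  assume a: "S \<subseteq> {..<r}" "expvec r \<beta>" "\<forall>i\<in>S. 1 \<le> \<beta> i" "int (card S) = p"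
  have nz: "mnm S \<beta> S' \<noteq> 0 \<Longrightarrow> S' = S" for S' unfolding mnm_def by (auto simp: fun_eq_iff split: if_splits)
  have nz2: "mnm S \<beta> S' \<alpha> \<noteq> 0 \<Longrightarrow> S' = S \<and> \<alpha> = \<beta>" for S' \<alpha> unfolding mnm_def by (auto split: if_splits)
  have sub: "{\<alpha>. mnm S \<beta> S' \<alpha> \<noteq> 0} \<subseteq> {\<beta>}" for S' using nz2 by auto
  show ?thesis
    apply (rule LcarrI)
    using nz a apply blast
    using nz a apply blast
    apply (rule finite_subset[OF sub]) apply simp
    using nz2 a apply blast
    using nz2 a apply blast
    done
qed

lemma Lcarr_supp_finite: "g \<in> Lcarr r p \<Longrightarrow> finite (supp (g S))"
  unfolding Lcarr_def supp_def by blast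

lemma expansion: "g \<in> Lcarr r p \<Longrightarrow>
   g = (\<Sum>S\<in>Sset r p. \<Sum>\<beta>\<in>supp (g S). scl (g S \<beta>) (mnm S \<beta>))"
proof (rule ext, rule ext)
  fix S0 \<gamma> assume g: "g \<in> Lcarr r p"
  have inner: "(\<Sum>\<beta>\<in>supp (g S). scl (g S \<beta>) (mnm S \<beta>) S0 \<gamma>) = (if S = S0 then g S0 \<gamma> else 0)" for S
  proof (cases "S = S0")
    case True
    have "(\<Sum>\<beta>\<in>supp (g S). scl (g S \<beta>) (mnm S \<beta>) S0 \<gamma>) = (\<Sum>\<beta>\<in>supp (g S). if \<beta> = \<gamma> then g S \<gamma> else 0)"
      using True by (intro sum.cong) (auto simp: scl_def mnm_def)
    also have "\<dots> = (if \<gamma> \<in> supp (g S) then g S \<gamma> else 0)"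
      using Lcarr_supp_finite[OF g] by (simp add: sum.delta')
    also have "\<dots> = g S \<gamma>" by (auto simp: supp_def)
    finally show ?thesis using True by simp
  next
    case False then show ?thesis by (simp add: scl_def mnm_def)
  qed
  have "(\<Sum>S\<in>Sset r p. \<Sum>\<beta>\<in>supp (g S). scl (g S \<beta>) (mnm S \<beta>)) S0 \<gamma>
      = (\<Sum>S\<in>Sset r p. \<Sum>\<beta>\<in>supp (g S). scl (g S \<beta>) (mnm S \<beta>) S0 \<gamma>)"
    by (simp add: sum_fun_apply)
  also have "\<dots> = (\<Sum>S\<in>Sset r p. if S = S0 then g S0 \<gamma> else 0)" using inner by simp
  also have "\<dots> = (if S0 \<in> Sset r p then g S0 \<gamma> else 0)"
    using finite_Sset by (simp add: sum.delta')
  also have "\<dots> = g S0 \<gamma>"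
  proof -
    have "g S0 \<noteq> 0 \<Longrightarrow> S0 \<in> Sset r p" using g unfolding Lcarr_def Sset_def by blast
    then show ?thesis by (cases "g S0 = 0") auto
  qed
  finally show "g S0 \<gamma> = (\<Sum>S\<in>Sset r p. \<Sum>\<beta>\<in>supp (g S). scl (g S \<beta>) (mnm S \<beta>)) S0 \<gamma>" by simp
qed

lemma HomL_carr: "\<phi> \<in> carr (HomL r x X) n \<longleftrightarrow> (\<forall>p.
          (\<forall>g\<in>Lcarr r p. \<phi> p g \<in> carr X (p + n))
        \<and> (\<forall>g. g \<notin> Lcarr r p \<longrightarrow> \<phi> p g = 0)
        \<and> (\<forall>g\<in>Lcarr r p. \<forall>g'\<in>Lcarr r p. \<phi> p (g + g') = \<phi> p g + \<phi> p g')
        \<and> (\<forall>c. \<forall>g\<in>Lcarr r p. \<phi> p (\<lambda>S \<alpha>. c * g S \<alpha>) = smul X c (\<phi> p g)))"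
  unfolding HomL_def by simp

context fixes X :: "('a::comm_ring_1, 'm::ab_group_add) cpx" and \<phi> and r x n
  assumes cX: "is_complex X" and ph: "\<phi> \<in> carr (HomL r x X) n"
begin
lemma hv: "g \<in> Lcarr r p \<Longrightarrow> \<phi> p g \<in> carr X (p+n)" using ph unfolding HomL_carr by blast
lemma hz: "g \<notin> Lcarr r p \<Longrightarrow> \<phi> p g = 0" using ph unfolding HomL_carr by blast
lemma hadd: "g \<in> Lcarr r p \<Longrightarrow> g' \<in> Lcarr r p \<Longrightarrow> \<phi> p (g + g') = \<phi> p g + \<phi> p g'" using ph unfolding HomL_carr by blast
lemma hscl: "g \<in> Lcarr r p \<Longrightarrow> \<phi> p (scl c g) = smul X c (\<phi> p g)" using ph unfolding HomL_carr scl_def by blast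
lemma h0: "\<phi> p 0 = 0"
proof -
  have "\<phi> p (0+0) = \<phi> p 0 + \<phi> p 0" using hadd[OF Lcarr_zero Lcarr_zero, of p] .
  then have "\<phi> p 0 = \<phi> p 0 + \<phi> p 0" by (simp only: add_0_right)
  then show ?thesis by (metis add_cancel_right_right)
qed
lemma hsum: "finite I \<Longrightarrow> (\<And>i. i\<in>I \<Longrightarrow> g i \<in> Lcarr r p) \<Longrightarrow> \<phi> p (\<Sum>i\<in>I. g i) = (\<Sum>i\<in>I. \<phi> p (g i))"
proof (induction I rule: finite_induct)
  case empty then show ?case by (simp only: sum.empty h0)
next
  case (insert a A)
  have "\<phi> p (g a + sum g A) = \<phi> p (g a) + \<phi> p (sum g A)"
    using insert by (intro hadd Lcarr_sum) auto
  moreover have "\<phi> p (sum g A) = (\<Sum>i\<in>A. \<phi> p (g i))" using insert by auto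
  ultimately show ?case by (simp only: sum.insert[OF insert(1,2)])
qed
end


definition esg :: "nat \<Rightarrow> int \<Rightarrow> 'b::ab_group_add \<Rightarrow> 'b" where
 "esg k n y = (if even (int k * n + int (k*(k+1) div 2)) then y else - y)"
definition shiftS :: "nat set \<Rightarrow> (nat\<Rightarrow>nat) \<Rightarrow> nat \<Rightarrow> nat" where
 "shiftS S \<alpha> = (\<lambda>k. if k\<in>S then Suc (\<alpha> k) else \<alpha> k)"
definition unshift :: "nat set \<Rightarrow> (nat\<Rightarrow>nat) \<Rightarrow> nat \<Rightarrow> nat" where
 "unshift S \<beta> = (\<lambda>k. if k\<in>S then \<beta> k - 1 else \<beta> k)"
definition Fmap :: "nat \<Rightarrow> int \<Rightarrow> (int \<Rightarrow> (nat set \<Rightarrow> (nat\<Rightarrow>nat) \<Rightarrow> 'a::comm_ring_1) \<Rightarrow> 'm::ab_group_add) \<Rightarrow> nat set \<Rightarrow> (nat\<Rightarrow>nat) \<Rightarrow> 'm" where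
 "Fmap r n \<phi> S \<alpha> = (if S \<subseteq> {..<r} \<and> expvec r \<alpha> then esg (card S) n (\<phi> (int (card S)) (mnm S (shiftS S \<alpha>))) else 0)"
definition Gmap :: "nat \<Rightarrow> ('a::comm_ring_1, 'm::ab_group_add) cpx \<Rightarrow> int \<Rightarrow> (nat set \<Rightarrow> (nat\<Rightarrow>nat) \<Rightarrow> 'm) \<Rightarrow> int \<Rightarrow> (nat set \<Rightarrow> (nat\<Rightarrow>nat) \<Rightarrow> 'a) \<Rightarrow> 'm" where
 "Gmap r X n h p g = (if g \<in> Lcarr r p then (\<Sum>S\<in>Sset r p. \<Sum>\<beta>\<in>supp (g S). smul X (g S \<beta>) (esg (card S) n (h S (unshift S \<beta>)))) else 0)"

lemma esg_esg[simp]: "esg k n (esg k n y) = y" by (simp add: esg_def)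
lemma esg_add: "esg k n (a + b) = esg k n a + esg k n b" by (simp add: esg_def)
lemma esg_zero[simp]: "esg k n 0 = 0" by (simp add: esg_def)

lemma unshift_shiftS[simp]: "unshift S (shiftS S \<alpha>) = \<alpha>"
  by (simp add: unshift_def shiftS_def fun_eq_iff)
lemma shiftS_unshift: "\<forall>i\<in>S. 1 \<le> \<beta> i \<Longrightarrow> shiftS S (unshift S \<beta>) = \<beta>"
  by (auto simp add: unshift_def shiftS_def fun_eq_iff)
lemma expvec_shiftS: "S \<subseteq> {..<r} \<Longrightarrow> expvec r \<alpha> \<Longrightarrow> expvec r (shiftS S \<alpha>)"
  by (auto simp add: expvec_def shiftS_def)
lemma expvec_unshift: "expvec r \<beta> \<Longrightarrow> expvec r (unshift S \<beta>)"
  by (auto simp add: expvec_def unshift_def)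
lemma shiftS_ge: "\<forall>i\<in>S. 1 \<le> shiftS S \<alpha> i" by (simp add: shiftS_def)

lemma mnm_Lcarr: "S \<subseteq> {..<r} \<Longrightarrow> expvec r \<alpha> \<Longrightarrow> mnm S (shiftS S \<alpha>) \<in> Lcarr r (int (card S))"
  using expvec_shiftS[of S r \<alpha>] by (intro Lcarr_mnm) (auto simp: shiftS_def)

lemma KosX_carr: "h \<in> carr (KosX r x X) n \<longleftrightarrow> (\<forall>S \<alpha>.
          if S \<subseteq> {..<r} \<and> expvec r \<alpha> then h S \<alpha> \<in> carr X (n + int (card S))
          else h S \<alpha> = 0)"
  unfolding KosX_def by simp

context fixes X :: "('a::comm_ring_1, 'm::ab_group_add) cpx" assumes cX: "is_complex X"
begin

lemma esg_carr: "y \<in> carr X m \<Longrightarrow> esg k n y \<in> carr X m" by (simp add: esg_def cneg[OF cX])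
lemma esg_smul: "y \<in> carr X m \<Longrightarrow> smul X c (esg k n y) = esg k n (smul X c y)"
  by (simp add: esg_def sneg[OF cX])
lemma esg_diff: "y \<in> carr X m \<Longrightarrow> diff X m (esg k n y) = esg k n (diff X m y)"
  by (simp add: esg_def dneg[OF cX])

lemma kv: "h \<in> carr (KosX r x X) n \<Longrightarrow> S \<subseteq> {..<r} \<Longrightarrow> h S \<alpha> \<in> carr X (n + int (card S))"
  unfolding KosX_carr by (metis c0[OF cX])
lemma kz: "h \<in> carr (KosX r x X) n \<Longrightarrow> \<not> (S \<subseteq> {..<r} \<and> expvec r \<alpha>) \<Longrightarrow> h S \<alpha> = 0"
  unfolding KosX_carr by metis

lemma ssupp: "finite B \<Longrightarrow> supp f \<subseteq> B \<Longrightarrow> (\<And>\<beta>. y \<beta> \<in> carr X m) \<Longrightarrow>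
   (\<Sum>\<beta>\<in>supp f. smul X (f \<beta>) (y \<beta>)) = (\<Sum>\<beta>\<in>B. smul X (f \<beta>) (y \<beta>))"
proof -
  assume a: "finite B" "supp f \<subseteq> B" "\<And>\<beta>. y \<beta> \<in> carr X m"
  have z: "smul X 0 (y \<beta>) = 0" for \<beta> using szerol[OF cX a(3)] .
  show ?thesis by (rule sum.mono_neutral_left) (use a z in \<open>auto simp: supp_def\<close>)
qed

lemma F_in: assumes ph: "\<phi> \<in> carr (HomL r x X) n" shows "Fmap r n \<phi> \<in> carr (KosX r x X) n"
  unfolding KosX_carr
proof (intro allI)
  fix S \<alpha>
  show "if S \<subseteq> {..<r} \<and> expvec r \<alpha> then Fmap r n \<phi> S \<alpha> \<in> carr X (n + int (card S)) else Fmap r n \<phi> S \<alpha> = 0"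
  proof (cases "S \<subseteq> {..<r} \<and> expvec r \<alpha>")
    case True
    have "\<phi> (int (card S)) (mnm S (shiftS S \<alpha>)) \<in> carr X (int (card S) + n)"
      using True by (intro hv[OF cX ph] mnm_Lcarr) auto
    then show ?thesis using True by (simp add: Fmap_def esg_carr add.commute)
  next
    case False then show ?thesis by (auto simp: Fmap_def)
  qed
qed

lemma F_add: assumes "\<phi> \<in> carr (HomL r x X) n" "\<psi> \<in> carr (HomL r x X) n"
  shows "Fmap r n (\<phi> + \<psi>) = Fmap r n \<phi> + Fmap r n \<psi>"
  by (simp add: Fmap_def fun_eq_iff esg_add)

lemma F_smul: assumes ph: "\<phi> \<in> carr (HomL r x X) n"
  shows "Fmap r n (smul (HomL r x X) c \<phi>) = smul (KosX r x X) c (Fmap r n \<phi>)"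
proof (rule ext, rule ext)
  fix S \<alpha>
  show "Fmap r n (smul (HomL r x X) c \<phi>) S \<alpha> = smul (KosX r x X) c (Fmap r n \<phi>) S \<alpha>"
  proof (cases "S \<subseteq> {..<r} \<and> expvec r \<alpha>")
    case True
    have "\<phi> (int (card S)) (mnm S (shiftS S \<alpha>)) \<in> carr X (int (card S) + n)"
      using True by (intro hv[OF cX ph] mnm_Lcarr) auto
    then show ?thesis using True by (simp add: Fmap_def HomL_def KosX_def esg_smul)
  next
    case False then show ?thesis by (auto simp: Fmap_def HomL_def KosX_def szero[OF cX])
  qed
qed

lemma hcarr': assumes h: "h \<in> carr (KosX r x X) n" and S: "S \<in> Sset r p"
  shows "esg (card S) n (h S \<beta>) \<in> carr X (p + n)"
proof -
  have "h S \<beta> \<in> carr X (n + int (card S))" using S by (intro kv[OF h]) (auto simp: Sset_def)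
  then show ?thesis using S by (auto simp: Sset_def add.commute intro: esg_carr)
qed

lemma G_in: assumes h: "h \<in> carr (KosX r x X) n" shows "Gmap r X n h \<in> carr (HomL r x X) n"
  unfolding HomL_carr
proof (intro allI conjI ballI impI)
  fix p
  let ?y = "\<lambda>S \<beta>. esg (card S) n (h S (unshift S \<beta>))"
  have y: "S \<in> Sset r p \<Longrightarrow> ?y S \<beta> \<in> carr X (p + n)" for S \<beta> by (rule hcarr'[OF h])
  show "Gmap r X n h p g \<in> carr X (p + n)" if g: "g \<in> Lcarr r p" for g
    unfolding Gmap_def using g finite_Sset Lcarr_supp_finite[OF g]
    by (auto intro!: csum[OF cX] csmul[OF cX] y)
  show "Gmap r X n h p g = 0" if "g \<notin> Lcarr r p" for g using that by (simp add: Gmap_def)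
  show "Gmap r X n h p (g + g') = Gmap r X n h p g + Gmap r X n h p g'"
    if g: "g \<in> Lcarr r p" and g': "g' \<in> Lcarr r p" for g g'
  proof -
    have gg: "g + g' \<in> Lcarr r p" using g g' by (rule Lcarr_add)
    have inner: "(\<Sum>\<beta>\<in>supp ((g + g') S). smul X ((g + g') S \<beta>) (?y S \<beta>)) =
       (\<Sum>\<beta>\<in>supp (g S). smul X (g S \<beta>) (?y S \<beta>)) + (\<Sum>\<beta>\<in>supp (g' S). smul X (g' S \<beta>) (?y S \<beta>))"
      if S: "S \<in> Sset r p" for S
    proof -
      let ?B = "supp (g S) \<union> supp (g' S)"
      have fin: "finite ?B" using Lcarr_supp_finite[OF g] Lcarr_supp_finite[OF g'] by simp
      have s1: "supp ((g + g') S) \<subseteq> ?B" by (auto simp: supp_def)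
      have "(\<Sum>\<beta>\<in>supp ((g + g') S). smul X ((g + g') S \<beta>) (?y S \<beta>)) = (\<Sum>\<beta>\<in>?B. smul X ((g + g') S \<beta>) (?y S \<beta>))"
        by (rule ssupp[OF fin s1 y[OF S]])
      also have "\<dots> = (\<Sum>\<beta>\<in>?B. smul X (g S \<beta>) (?y S \<beta>) + smul X (g' S \<beta>) (?y S \<beta>))"
        by (intro sum.cong refl) (simp add: sadd1[OF cX y[OF S]])
      also have "\<dots> = (\<Sum>\<beta>\<in>?B. smul X (g S \<beta>) (?y S \<beta>)) + (\<Sum>\<beta>\<in>?B. smul X (g' S \<beta>) (?y S \<beta>))"
        by (rule sum.distrib)
      also have "\<dots> = (\<Sum>\<beta>\<in>supp (g S). smul X (g S \<beta>) (?y S \<beta>)) + (\<Sum>\<beta>\<in>supp (g' S). smul X (g' S \<beta>) (?y S \<beta>))"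
        using ssupp[OF fin _ y[OF S], of "g S"] ssupp[OF fin _ y[OF S], of "g' S"] by auto
      finally show ?thesis .
    qed
    show ?thesis unfolding Gmap_def if_P[OF g] if_P[OF g'] if_P[OF gg]
      by (simp only: sum.cong[OF refl inner] sum.distrib)
  qed
  show "Gmap r X n h p (\<lambda>S \<alpha>. c * g S \<alpha>) = smul X c (Gmap r X n h p g)" if g: "g \<in> Lcarr r p" for c g
  proof -
    have cg: "scl c g \<in> Lcarr r p" using g by (rule Lcarr_scl)
    have inner: "(\<Sum>\<beta>\<in>supp (scl c g S). smul X (scl c g S \<beta>) (?y S \<beta>)) =
       smul X c (\<Sum>\<beta>\<in>supp (g S). smul X (g S \<beta>) (?y S \<beta>))"
      if S: "S \<in> Sset r p" for S
    proof -
      have fin: "finite (supp (g S))" using Lcarr_supp_finite[OF g] .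
      have s1: "supp (scl c g S) \<subseteq> supp (g S)" by (auto simp: supp_def scl_def)
      have "(\<Sum>\<beta>\<in>supp (scl c g S). smul X (scl c g S \<beta>) (?y S \<beta>)) = (\<Sum>\<beta>\<in>supp (g S). smul X (scl c g S \<beta>) (?y S \<beta>))"
        by (rule ssupp[OF fin s1 y[OF S]])
      also have "\<dots> = (\<Sum>\<beta>\<in>supp (g S). smul X c (smul X (g S \<beta>) (?y S \<beta>)))"
        by (intro sum.cong refl) (simp add: scl_def smult[OF cX y[OF S]])
      also have "\<dots> = smul X c (\<Sum>\<beta>\<in>supp (g S). smul X (g S \<beta>) (?y S \<beta>))"
        by (rule ssum[OF cX fin, symmetric]) (rule csmul[OF cX y[OF S]])
      finally show ?thesis .
    qed
    have "Gmap r X n h p (scl c g) = smul X c (Gmap r X n h p g)"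
    proof -
      have "(\<Sum>S\<in>Sset r p. \<Sum>\<beta>\<in>supp (scl c g S). smul X (scl c g S \<beta>) (?y S \<beta>))
          = (\<Sum>S\<in>Sset r p. smul X c (\<Sum>\<beta>\<in>supp (g S). smul X (g S \<beta>) (?y S \<beta>)))"
        by (rule sum.cong[OF refl inner])
      also have "\<dots> = smul X c (\<Sum>S\<in>Sset r p. \<Sum>\<beta>\<in>supp (g S). smul X (g S \<beta>) (?y S \<beta>))"
        by (rule ssum[OF cX finite_Sset, symmetric])
          (use Lcarr_supp_finite[OF g] in \<open>auto intro!: csum[OF cX] csmul[OF cX] y\<close>)
      finally show ?thesis unfolding Gmap_def if_P[OF g] if_P[OF cg] .
    qed
    then show ?thesis by (simp add: scl_def)
  qed
qed

end


context fixes X :: "('a::comm_ring_1, 'm::ab_group_add) cpx" assumes cX: "is_complex X"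
begin

lemma FG: assumes h: "h \<in> carr (KosX r x X) n" shows "Fmap r n (Gmap r X n h) = h"
proof (rule ext, rule ext)
  fix S \<alpha>
  show "Fmap r n (Gmap r X n h) S \<alpha> = h S \<alpha>"
  proof (cases "S \<subseteq> {..<r} \<and> expvec r \<alpha>")
    case False then show ?thesis using kz[OF cX h False] by (auto simp: Fmap_def)
  next
    case True
    let ?s = "shiftS S \<alpha>"
    let ?m = "mnm S ?s :: nat set \<Rightarrow> (nat \<Rightarrow> nat) \<Rightarrow> 'a"
    let ?p = "int (card S)"
    let ?y = "\<lambda>S \<beta>. esg (card S) n (h S (unshift S \<beta>))"
    have m: "?m \<in> Lcarr r ?p" using True by (intro mnm_Lcarr) auto
    have SS: "S \<in> Sset r ?p" using True by (auto simp: Sset_def)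
    have y: "S' \<in> Sset r ?p \<Longrightarrow> ?y S' \<beta> \<in> carr X (?p + n)" for S' \<beta> by (rule hcarr'[OF cX h])
    have inner: "(\<Sum>\<beta>\<in>supp (?m S'). smul X (?m S' \<beta>) (?y S' \<beta>)) = (if S' = S then ?y S ?s else 0)"
      if S': "S' \<in> Sset r ?p" for S'
    proof (cases "S' = S")
      case True
      have "(\<Sum>\<beta>\<in>supp (?m S'). smul X (?m S' \<beta>) (?y S' \<beta>)) = (\<Sum>\<beta>\<in>{?s}. smul X (?m S' \<beta>) (?y S' \<beta>))"
        by (rule ssupp[OF cX _ _ y[OF S']]) (auto simp: supp_def mnm_def split: if_splits)
      also have "\<dots> = ?y S ?s" using True sone[OF cX y[OF S', of ?s]] by (simp add: mnm_def)
      finally show ?thesis using True by simp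
    next
      case False
      then have "supp (?m S') = {}" by (auto simp: supp_def mnm_def)
      then show ?thesis using False by simp
    qed
    have "Gmap r X n h ?p ?m = (\<Sum>S'\<in>Sset r ?p. \<Sum>\<beta>\<in>supp (?m S'). smul X (?m S' \<beta>) (?y S' \<beta>))"
      unfolding Gmap_def using m by simp
    also have "\<dots> = (\<Sum>S'\<in>Sset r ?p. if S' = S then ?y S ?s else 0)"
      by (rule sum.cong[OF refl inner])
    also have "\<dots> = ?y S ?s" using SS finite_Sset by (simp add: sum.delta')
    finally show ?thesis using True by (simp add: Fmap_def)
  qed
qed

lemma GF: assumes ph: "\<phi> \<in> carr (HomL r x X) n" shows "Gmap r X n (Fmap r n \<phi>) = \<phi>"
proof (rule ext, rule ext)
  fix p g
  show "Gmap r X n (Fmap r n \<phi>) p g = \<phi> p g"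
  proof (cases "g \<in> Lcarr r p")
    case False then show ?thesis by (simp add: Gmap_def hz[OF cX ph])
  next
    case True
    note g = True
    have mL: "S \<in> Sset r p \<Longrightarrow> \<beta> \<in> supp (g S) \<Longrightarrow> mnm S \<beta> \<in> Lcarr r p" for S \<beta>
      using LcarrD[OF g] by (intro Lcarr_mnm) (auto simp: Sset_def supp_def)
    have "\<phi> p g = \<phi> p (\<Sum>S\<in>Sset r p. \<Sum>\<beta>\<in>supp (g S). scl (g S \<beta>) (mnm S \<beta>))"
      by (rule arg_cong[where f="\<phi> p", OF expansion[OF g]])
    also have "\<dots> = (\<Sum>S\<in>Sset r p. \<phi> p (\<Sum>\<beta>\<in>supp (g S). scl (g S \<beta>) (mnm S \<beta>)))"
      by (rule hsum[OF cX ph finite_Sset])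
         (use Lcarr_supp_finite[OF g] mL in \<open>auto intro!: Lcarr_sum Lcarr_scl\<close>)
    also have "\<dots> = (\<Sum>S\<in>Sset r p. \<Sum>\<beta>\<in>supp (g S). smul X (g S \<beta>) (\<phi> p (mnm S \<beta>)))"
    proof (rule sum.cong[OF refl])
      fix S assume S: "S \<in> Sset r p"
      have "\<phi> p (\<Sum>\<beta>\<in>supp (g S). scl (g S \<beta>) (mnm S \<beta>)) = (\<Sum>\<beta>\<in>supp (g S). \<phi> p (scl (g S \<beta>) (mnm S \<beta>)))"
        by (rule hsum[OF cX ph Lcarr_supp_finite[OF g]]) (use mL S in \<open>auto intro!: Lcarr_scl\<close>)
      also have "\<dots> = (\<Sum>\<beta>\<in>supp (g S). smul X (g S \<beta>) (\<phi> p (mnm S \<beta>)))"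
        by (rule sum.cong[OF refl]) (use mL S in \<open>auto intro!: hscl[OF cX ph]\<close>)
      finally show "\<phi> p (\<Sum>\<beta>\<in>supp (g S). scl (g S \<beta>) (mnm S \<beta>)) = (\<Sum>\<beta>\<in>supp (g S). smul X (g S \<beta>) (\<phi> p (mnm S \<beta>)))" .
    qed
    also have "\<dots> = Gmap r X n (Fmap r n \<phi>) p g"
      unfolding Gmap_def if_P[OF g]
    proof (intro sum.cong refl)
      fix S \<beta> assume S: "S \<in> Sset r p" and b: "\<beta> \<in> supp (g S)"
      have Sr: "S \<subseteq> {..<r}" and pS: "int (card S) = p" using S by (auto simp: Sset_def)
      have e: "expvec r \<beta>" and ge: "\<forall>i\<in>S. 1 \<le> \<beta> i" using LcarrD[OF g] b by (auto simp: supp_def)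
      have "Fmap r n \<phi> S (unshift S \<beta>) = esg (card S) n (\<phi> p (mnm S \<beta>))"
        using Sr pS e ge by (simp add: Fmap_def expvec_unshift shiftS_unshift)
      then show "smul X (g S \<beta>) (\<phi> p (mnm S \<beta>)) = smul X (g S \<beta>) (esg (card S) n (Fmap r n \<phi> S (unshift S \<beta>)))"
        by simp
    qed
    finally show ?thesis by simp
  qed
qed

lemma F_bij: "bij_betw (Fmap r n) (carr (HomL r x X) n) (carr (KosX r x X) n)"
  by (rule bij_betw_byWitness[where f'="Gmap r X n"])
     (auto simp: GF FG F_in[OF cX] G_in[OF cX])

end


definition sgR :: "nat \<Rightarrow> 'a::comm_ring_1" where "sgR k = (if even k then 1 else -1)"

definition Lt :: "nat \<Rightarrow> (nat \<Rightarrow> 'a::comm_ring_1) \<Rightarrow> nat set \<Rightarrow> (nat \<Rightarrow> nat) \<Rightarrow> nat \<Rightarrow> nat set \<Rightarrow> (nat \<Rightarrow> nat) \<Rightarrow> 'a" where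
 "Lt r x T \<beta> i = scl (sgR (card {j\<in>T. j < i}) * x i) (mnm (insert i T) (\<beta>(i := Suc (\<beta> i))))
     + (if \<beta> i > 0 then scl (- sgR (card {j\<in>T. j < i})) (mnm (insert i T) \<beta>) else 0)"

lemma mulU_delta: "mulU i (\<lambda>\<gamma>. if \<gamma> = \<beta> then (1::'a::comm_ring_1) else 0) \<gamma> = (if \<gamma> = \<beta>(i := Suc (\<beta> i)) then 1 else 0)"
proof (cases "\<gamma> i = 0")
  case True
  then have "\<gamma> \<noteq> \<beta>(i := Suc (\<beta> i))" by auto
  then show ?thesis using True by (simp add: mulU_def)
next
  case False
  have "(\<gamma>(i := \<gamma> i - 1) = \<beta>) \<longleftrightarrow> (\<gamma> = \<beta>(i := Suc (\<beta> i)))"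
    using False by (auto simp: fun_eq_iff)
  then show ?thesis using False by (simp add: mulU_def)
qed

lemma sum_single: "finite A \<Longrightarrow> i \<in> A \<Longrightarrow> (\<And>j. j \<in> A \<Longrightarrow> j \<noteq> i \<Longrightarrow> f j = 0) \<Longrightarrow> sum f A = f i"
  by (simp add: sum.remove sum.neutral)

lemma psi_delta: "psi xi i (\<lambda>\<gamma>. if \<gamma> = \<beta> then (1::'a::comm_ring_1) else 0) \<gamma> =
   (if \<gamma> = \<beta>(i := Suc (\<beta> i)) then xi else 0) + (if \<gamma> = \<beta> \<and> \<beta> i > 0 then -1 else 0)"
proof -
  have ne: "\<beta> \<noteq> \<beta>(i := Suc (\<beta> i))" by (auto simp: fun_eq_iff)
  have "psi xi i (\<lambda>\<gamma>. if \<gamma> = \<beta> then (1::'a) else 0) \<gamma> =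
     atzero i (\<lambda>\<gamma>. if \<gamma> = \<beta> then (1::'a) else 0) \<gamma> - ((if \<gamma> = \<beta> then 1 else 0) - xi * (if \<gamma> = \<beta>(i := Suc (\<beta> i)) then 1 else 0))"
    by (simp add: psi_def mulU_delta)
  then show ?thesis using ne by (cases "\<gamma> = \<beta>"; cases "\<gamma> = \<beta>(i := Suc (\<beta> i))") (auto simp: atzero_def)
qed

lemma psi_zero: "psi xi i 0 = 0"
  by (simp add: psi_def atzero_def mulU_def fun_eq_iff)

lemma sg_zero: "sg k (0::'b::ab_group_add) = 0" by (simp add: sg_def)

lemma Ldiff_mnm:
  assumes T: "T \<subseteq> {..<r}"
  shows "Ldiff r x (mnm T \<beta>) = (\<Sum>i\<in>{..<r} - T. Lt r x T \<beta> i)"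
proof (rule ext, rule ext)
  fix T' \<gamma>
  have RHS: "(\<Sum>i\<in>{..<r} - T. Lt r x T \<beta> i) T' \<gamma> = (\<Sum>i\<in>{..<r} - T. Lt r x T \<beta> i T' \<gamma>)"
    by (simp add: sum_fun_apply)
  show "Ldiff r x (mnm T \<beta>) T' \<gamma> = (\<Sum>i\<in>{..<r} - T. Lt r x T \<beta> i) T' \<gamma>"
  proof (cases "\<exists>i\<in>{..<r} - T. T' = insert i T")
    case True
    then obtain i where i: "i \<in> {..<r} - T" and T': "T' = insert i T" by blast
    have T'r: "T' \<subseteq> {..<r}" using i T' T by auto
    have finT': "finite T'" using T'r finite_subset by blast
    have other: "j \<in> T' - {i} \<Longrightarrow> T' - {j} \<noteq> T" for j using i T' by auto
    have "Ldiff r x (mnm T \<beta>) T' = (\<Sum>j\<in>T'. sg (card {k\<in>T'. k < j}) (psi (x j) j (mnm T \<beta> (T' - {j}))))"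
      using T'r by (simp add: Ldiff_def)
    also have "\<dots> = sg (card {k\<in>T'. k < i}) (psi (x i) i (mnm T \<beta> (T' - {i})))"
    proof (rule sum_single[OF finT'])
      show "i \<in> T'" using T' by simp
      fix j assume "j \<in> T'" "j \<noteq> i"
      then have "mnm T \<beta> (T' - {j}) = 0" using other by (auto simp: mnm_def fun_eq_iff)
      then show "sg (card {k\<in>T'. k < j}) (psi (x j) j (mnm T \<beta> (T' - {j}))) = 0"
        by (metis psi_zero sg_zero)
    qed
    finally have L: "Ldiff r x (mnm T \<beta>) T' \<gamma> = sg (card {k\<in>T'. k < i}) (psi (x i) i (mnm T \<beta> (T' - {i}))) \<gamma>" by simp
    have "(\<Sum>i'\<in>{..<r} - T. Lt r x T \<beta> i' T' \<gamma>) = Lt r x T \<beta> i T' \<gamma>"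
    proof (rule sum_single[OF _ i])
      show "finite ({..<r} - T)" by simp
      fix j assume j: "j \<in> {..<r} - T" "j \<noteq> i"
      then have "insert j T \<noteq> T'" using T' i by auto
      then show "Lt r x T \<beta> j T' \<gamma> = 0" by (simp add: Lt_def scl_def mnm_def)
    qed
    moreover
    have c: "{k\<in>T'. k < i} = {k\<in>T. k < i}" using T' by auto
    have Ti: "T' - {i} = T" using T' i by auto
    have "sg (card {k\<in>T'. k < i}) (psi (x i) i (mnm T \<beta> (T' - {i}))) \<gamma> = Lt r x T \<beta> i T' \<gamma>"
    proof -
      have mT: "mnm T \<beta> T = (\<lambda>\<gamma>. if \<gamma> = \<beta> then 1 else 0)" by (simp add: mnm_def)
      have iT: "i \<notin> T" using i by simp
      have "Lt r x T \<beta> i T' \<gamma> = sgR (card {j\<in>T. j < i}) * ((if \<gamma> = \<beta>(i := Suc (\<beta> i)) then x i else 0)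
          + (if \<gamma> = \<beta> \<and> \<beta> i > 0 then -1 else 0))"
        by (simp add: Lt_def scl_def mnm_def T' algebra_simps)
      moreover have "sg k f \<gamma> = sgR k * f \<gamma>" for k and f :: "(nat \<Rightarrow> nat) \<Rightarrow> 'a"
        by (simp add: sg_def sgR_def)
      ultimately show ?thesis unfolding c Ti mT psi_delta by simp
    qed
    ultimately show ?thesis using L RHS by simp
  next
    case False
    have z: "Lt r x T \<beta> i T' \<gamma> = 0" if "i \<in> {..<r} - T" for i
      using False that by (auto simp: Lt_def scl_def mnm_def)
    have "Ldiff r x (mnm T \<beta>) T' = 0"
    proof (cases "T' \<subseteq> {..<r}")
      case True
      have mz: "mnm T \<beta> (T' - {j}) = 0" if "j \<in> T'" for j
      proof -
        have "T' - {j} \<noteq> T" using False True that by auto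
        then show ?thesis by (auto simp: mnm_def fun_eq_iff)
      qed
      have "(\<Sum>j\<in>T'. sg (card {k \<in> T'. k < j}) (psi (x j) j (mnm T \<beta> (T' - {j})))) = 0"
      proof (intro sum.neutral ballI)
        fix j assume j: "j \<in> T'"
        show "sg (card {k \<in> T'. k < j}) (psi (x j) j (mnm T \<beta> (T' - {j}))) = 0"
          unfolding mz[OF j] psi_zero sg_zero by (rule refl)
      qed
      then show ?thesis using True by (simp add: Ldiff_def)
    next
      case False then show ?thesis by (simp add: Ldiff_def)
    qed
    then show ?thesis using RHS z by simp
  qed
qed



lemma par_a: "even (int p * (n + 1) + int (p*(p+1) div 2)) \<longleftrightarrow>
   (even (int p * n + int (p*(p+1) div 2)) \<longleftrightarrow> even p)"
proof -
  have "int p * (n + 1) + int (p*(p+1) div 2) = (int p * n + int (p*(p+1) div 2)) + int p"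
    by (simp add: algebra_simps)
  moreover have "even (A + int p) \<longleftrightarrow> (even A \<longleftrightarrow> even p)" for A :: int by simp
  ultimately show ?thesis by metis
qed

lemma par_b: "even (int (Suc p) * n + int (Suc p*(Suc p+1) div 2)) \<longleftrightarrow>
   (even (int p * (n + 1) + int (p*(p+1) div 2)) \<longleftrightarrow> even (n + 1))"
proof -
  have t: "Suc p*(Suc p+1) div 2 = p*(p+1) div 2 + (p + 1)"
  proof -
    have "Suc p*(Suc p+1) = p*(p+1) + 2 * (p+1)" by (simp add: algebra_simps)
    then show ?thesis by simp
  qed
  have "int (Suc p) * n + int (Suc p*(Suc p+1) div 2) = (int p * (n + 1) + int (p*(p+1) div 2)) + (n + 1)"
    unfolding t by (simp add: algebra_simps)
  moreover have "even (A + (n + 1)) \<longleftrightarrow> (even A \<longleftrightarrow> even (n + 1))" for A :: int by simp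
  ultimately show ?thesis by metis
qed

lemma sg_apply: "sg k f \<alpha> = sg k (f \<alpha>)" by (simp add: sg_def)
lemma mulT_apply: "mulT X xi i f \<alpha> = smul X xi (f \<alpha>) - mulU i f \<alpha>" by (simp add: mulT_def)

lemma grp_lemma: "esg k m (a - (if e then sum t I else - sum t I)) =
   esg k m a + (\<Sum>i\<in>I. esg k m (- (if e then t i else - t i)))"
  by (cases e) (simp_all add: esg_def sum_negf)

lemma grp_sum_sg: "(\<Sum>i\<in>I. sg (c i) (f i)) + y = (\<Sum>i\<in>I. sg (c i) (f i)) + y" by simp

context fixes X :: "('a::comm_ring_1, 'm::ab_group_add) cpx" assumes cX: "is_complex X"
begin

lemma peri: assumes B: "B \<in> carr X q" and C: "C \<in> carr X q"
  shows "esg p (n+1) (- (if even n then smul X (sgR c * xi) B + (if b then smul X (- sgR c) C else 0)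
                     else - (smul X (sgR c * xi) B + (if b then smul X (- sgR c) C else 0))))
   = sg c (smul X xi (esg (Suc p) n B) - (if b then esg (Suc p) n C else 0))"
proof -
  have s1: "smul X (sgR c * xi) B = (if even c then smul X xi B else - smul X xi B)"
    by (simp add: sgR_def snegc[OF cX B])
  have s2: "smul X (- sgR c) C = (if even c then - C else C)"
    by (simp add: sgR_def snegc[OF cX C] sone[OF cX C])
  have s3: "smul X xi (esg (Suc p) n B) = esg (Suc p) n (smul X xi B)" by (rule esg_smul[OF cX B])
  define E1 where "E1 = even (int p * (n + 1) + int (p*(p+1) div 2))"
  have e1: "esg p (n+1) y = (if E1 then y else - y)" for y :: 'm by (simp add: esg_def E1_def)
  have e2: "esg (Suc p) n y = (if (E1 \<longleftrightarrow> even (n + 1)) then y else - y)" for y :: 'm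
    unfolding esg_def E1_def par_b by (rule refl)
  have en: "even (n + 1) \<longleftrightarrow> \<not> even n" by simp
  show ?thesis unfolding s1 s2 s3 e1 e2 sg_def en
    by (cases E1; cases "even n"; cases "even c"; cases b) (simp_all add: sneg[OF cX B] algebra_simps)
qed

lemma Lt_Lcarr: assumes T: "T \<subseteq> {..<r}" and i: "i \<in> {..<r} - T" and e: "expvec r \<beta>" and ge: "\<forall>j\<in>T. 1 \<le> \<beta> j"
  shows "mnm (insert i T) (\<beta>(i := Suc (\<beta> i))) \<in> Lcarr r (int (card T) + 1)"
    "0 < \<beta> i \<Longrightarrow> mnm (insert i T) \<beta> \<in> Lcarr r (int (card T) + 1)"
    "Lt r x T \<beta> i \<in> Lcarr r (int (card T) + 1)"
proof -
  have fT: "finite T" using T finite_subset by blast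
  have cd: "int (card (insert i T)) = int (card T) + 1" using fT i by simp
  show m1: "mnm (insert i T) (\<beta>(i := Suc (\<beta> i))) \<in> Lcarr r (int (card T) + 1)"
    using T i e ge cd by (intro Lcarr_mnm) (auto simp: expvec_def)
  show m2: "0 < \<beta> i \<Longrightarrow> mnm (insert i T) \<beta> \<in> Lcarr r (int (card T) + 1)"
    using T i e ge cd by (intro Lcarr_mnm) (auto simp: expvec_def)
  show "Lt r x T \<beta> i \<in> Lcarr r (int (card T) + 1)"
    unfolding Lt_def using m1 m2 by (auto intro!: Lcarr_add Lcarr_scl Lcarr_zero)
qed

end


lemma HomL_diff: "diff (HomL r x X) n \<phi> p g = (if g \<in> Lcarr r p then diff X (p + n) (\<phi> p g) - (if even n then \<phi> (p + 1) (Ldiff r x g) else - \<phi> (p + 1) (Ldiff r x g)) else 0)"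
  by (simp add: HomL_def)

lemma KosX_diff_apply: "diff (KosX r x X) n h T \<alpha> = (if T \<subseteq> {..<r} then (\<Sum>i\<in>{..<r} - T. sg (card {j\<in>T. j < i}) (mulT X (x i) i (h (insert i T)) \<alpha>)) + sg (card T) (if expvec r \<alpha> then diff X (n + int (card T)) (h T \<alpha>) else 0) else 0)"
  by (simp add: KosX_def sum_fun_apply sg_apply)

context fixes X :: "('a::comm_ring_1, 'm::ab_group_add) cpx" assumes cX: "is_complex X"
begin

lemma hv': assumes ph: "\<phi> \<in> carr (HomL r x X) n" shows "\<phi> q g \<in> carr X (q + n)"
  using hv[OF cX ph] hz[OF cX ph] c0[OF cX] by (cases "g \<in> Lcarr r q") auto

lemma dpart: assumes A: "A \<in> carr X (int p + n)"
  shows "esg p (n+1) (diff X (int p + n) A) = sg p (diff X (n + int p) (esg p n A))"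
proof -
  have "diff X (n + int p) (esg p n A) = esg p n (diff X (int p + n) A)"
    using esg_diff[OF cX A] by (simp add: add.commute)
  moreover have "esg p (n+1) y = sg p (esg p n y)" for y :: 'm
    unfolding esg_def sg_def par_a by auto
  ultimately show ?thesis by simp
qed

lemma F_diff: assumes ph: "\<phi> \<in> carr (HomL r x X) n"
  shows "Fmap r (n+1) (diff (HomL r x X) n \<phi>) = diff (KosX r x X) n (Fmap r n \<phi>)"
proof (rule ext, rule ext)
  fix T \<alpha>
  show "Fmap r (n+1) (diff (HomL r x X) n \<phi>) T \<alpha> = diff (KosX r x X) n (Fmap r n \<phi>) T \<alpha>"
  proof (cases "T \<subseteq> {..<r}")
    case False then show ?thesis by (simp add: Fmap_def KosX_diff_apply)
  next
    case T: True
    show ?thesis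
    proof (cases "expvec r \<alpha>")
      case False
      have z: "mulT X (x i) i (Fmap r n \<phi> (insert i T)) \<alpha> = 0" if "i \<in> {..<r} - T" for i
      proof -
        have "Fmap r n \<phi> (insert i T) \<alpha> = 0" using False by (simp add: Fmap_def)
        moreover have "mulU i (Fmap r n \<phi> (insert i T)) \<alpha> = 0"
        proof -
          have "\<not> expvec r (\<alpha>(i := \<alpha> i - 1))" using False that by (auto simp: expvec_def)
          then show ?thesis by (simp add: mulU_def Fmap_def add.commute)
        qed
        ultimately show ?thesis by (simp add: mulT_apply szero[OF cX])
      qed
      show ?thesis using T False z by (simp add: Fmap_def KosX_diff_apply sg_zero)
    next
      case e: True
      define p where "p = card T"
      define \<beta> where "\<beta> = shiftS T \<alpha>"
      define c where "c i = card {j\<in>T. j < i}" for i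
      have fT: "finite T" using T finite_subset by blast
      have ge: "\<forall>j\<in>T. 1 \<le> \<beta> j" by (simp add: \<beta>_def shiftS_def)
      have eb: "expvec r \<beta>" using T e by (simp add: \<beta>_def expvec_shiftS)
      have m: "mnm T \<beta> \<in> Lcarr r (int p)" unfolding \<beta>_def p_def using T e by (rule mnm_Lcarr)
      have A: "\<phi> (int p) (mnm T \<beta>) \<in> carr X (int p + n)" by (rule hv[OF cX ph m])
      have bi: "\<beta> i = \<alpha> i" if "i \<in> {..<r} - T" for i using that by (simp add: \<beta>_def shiftS_def)
      let ?m1 = "\<lambda>i. mnm (insert i T) (\<beta>(i := Suc (\<beta> i)))"
      let ?m2 = "\<lambda>i. mnm (insert i T) \<beta>"
      let ?B = "\<lambda>i. \<phi> (int p + 1) (?m1 i)"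
      let ?C = "\<lambda>i. \<phi> (int p + 1) (?m2 i)"
      have B: "?B i \<in> carr X (int p + 1 + n)" for i by (rule hv'[OF ph])
      have C: "?C i \<in> carr X (int p + 1 + n)" for i by (rule hv'[OF ph])
      have L1: "Fmap r (n+1) (diff (HomL r x X) n \<phi>) T \<alpha> = esg p (n+1) (diff X (int p + n) (\<phi> (int p) (mnm T \<beta>))
          - (if even n then \<phi> (int p + 1) (Ldiff r x (mnm T \<beta>)) else - \<phi> (int p + 1) (Ldiff r x (mnm T \<beta>))))"
        using T e m by (auto simp: Fmap_def HomL_diff p_def \<beta>_def)
      have L2: "\<phi> (int p + 1) (Ldiff r x (mnm T \<beta>)) = (\<Sum>i\<in>{..<r} - T. \<phi> (int p + 1) (Lt r x T \<beta> i))"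
        unfolding Ldiff_mnm[OF T] by (rule hsum[OF cX ph]) (auto intro: Lt_Lcarr(3)[OF cX T _ eb ge] simp: p_def)
      have L3: "\<phi> (int p + 1) (Lt r x T \<beta> i) = smul X (sgR (c i) * x i) (?B i)
          + (if \<beta> i > 0 then smul X (- sgR (c i)) (?C i) else 0)" if i: "i \<in> {..<r} - T" for i
      proof (cases "\<beta> i > 0")
        case True
        have l1: "?m1 i \<in> Lcarr r (int p + 1)" using Lt_Lcarr(1)[OF cX T i eb ge] by (simp add: p_def)
        have l2: "?m2 i \<in> Lcarr r (int p + 1)" using Lt_Lcarr(2)[OF cX T i eb ge True] by (simp add: p_def)
        have "Lt r x T \<beta> i = scl (sgR (c i) * x i) (?m1 i) + scl (- sgR (c i)) (?m2 i)"
          using True by (simp add: Lt_def c_def)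
        then show ?thesis using True
          by (simp add: hadd[OF cX ph Lcarr_scl[OF l1] Lcarr_scl[OF l2]] hscl[OF cX ph l1] hscl[OF cX ph l2])
      next
        case False
        have l1: "?m1 i \<in> Lcarr r (int p + 1)" using Lt_Lcarr(1)[OF cX T i eb ge] by (simp add: p_def)
        have "Lt r x T \<beta> i = scl (sgR (c i) * x i) (?m1 i)"
          using False by (simp only: Lt_def c_def if_False add_0_right)
        then show ?thesis using False hscl[OF cX ph l1] by simp
      qed
      have cins: "card (insert i T) = Suc p" if "i \<in> {..<r} - T" for i using that fT by (simp add: p_def)
      have R1: "diff (KosX r x X) n (Fmap r n \<phi>) T \<alpha> = (\<Sum>i\<in>{..<r}-T. sg (c i) (smul X (x i) (Fmap r n \<phi> (insert i T) \<alpha>)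
            - mulU i (Fmap r n \<phi> (insert i T)) \<alpha>)) + sg p (diff X (n + int p) (Fmap r n \<phi> T \<alpha>))"
        using T e by (simp add: KosX_diff_apply mulT_apply c_def p_def)
      have R2: "Fmap r n \<phi> (insert i T) \<alpha> = esg (Suc p) n (?B i)" if i: "i \<in> {..<r} - T" for i
      proof -
        have "shiftS (insert i T) \<alpha> = \<beta>(i := Suc (\<beta> i))" using i
          by (auto simp: \<beta>_def shiftS_def fun_eq_iff)
        then show ?thesis using T e i cins[OF i] by (simp add: Fmap_def add.commute)
      qed
      have R3: "mulU i (Fmap r n \<phi> (insert i T)) \<alpha> = (if \<beta> i > 0 then esg (Suc p) n (?C i) else 0)"
        if i: "i \<in> {..<r} - T" for i
      proof (cases "\<alpha> i = 0")
        case True then show ?thesis using bi[OF i] by (simp add: mulU_def)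
      next
        case False
        have "shiftS (insert i T) (\<alpha>(i := \<alpha> i - 1)) = \<beta>" using i False
          by (auto simp: \<beta>_def shiftS_def fun_eq_iff)
        moreover have "expvec r (\<alpha>(i := \<alpha> i - 1))" using e i by (auto simp: expvec_def)
        ultimately show ?thesis using T i False bi[OF i] cins[OF i] by (simp add: mulU_def Fmap_def add.commute)
      qed
      have R4: "Fmap r n \<phi> T \<alpha> = esg p n (\<phi> (int p) (mnm T \<beta>))" using T e by (simp add: Fmap_def p_def \<beta>_def)
      have "Fmap r (n+1) (diff (HomL r x X) n \<phi>) T \<alpha> = esg p (n+1) (diff X (int p + n) (\<phi> (int p) (mnm T \<beta>)))
          + (\<Sum>i\<in>{..<r} - T. esg p (n+1) (- (if even n then \<phi> (int p + 1) (Lt r x T \<beta> i) else - \<phi> (int p + 1) (Lt r x T \<beta> i))))"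
        unfolding L1 L2 by (rule grp_lemma)
      also have "\<dots> = sg p (diff X (n + int p) (esg p n (\<phi> (int p) (mnm T \<beta>))))
          + (\<Sum>i\<in>{..<r}-T. sg (c i) (smul X (x i) (esg (Suc p) n (?B i)) - (if \<beta> i > 0 then esg (Suc p) n (?C i) else 0)))"
      proof (intro arg_cong2[where f="(+)"] dpart[OF A] sum.cong refl)
        fix i assume i: "i \<in> {..<r} - T"
        show "esg p (n+1) (- (if even n then \<phi> (int p + 1) (Lt r x T \<beta> i) else - \<phi> (int p + 1) (Lt r x T \<beta> i)))
          = sg (c i) (smul X (x i) (esg (Suc p) n (?B i)) - (if \<beta> i > 0 then esg (Suc p) n (?C i) else 0))"
          unfolding L3[OF i] by (rule peri[OF cX B C])
      qed
      also have "\<dots> = diff (KosX r x X) n (Fmap r n \<phi>) T \<alpha>"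
        unfolding R1 R4 by (simp add: R2 R3 add.commute)
      finally show ?thesis .
    qed
  qed
qed

end

theorem theorem1p1:
  fixes r :: nat and x :: "nat \<Rightarrow> 'a::comm_ring_1" and X :: "('a, 'm::ab_group_add) cpx"
  assumes "is_complex X"
  shows "cpx_iso (HomL r x X) (KosX r x X)"
  unfolding cpx_iso_def
proof (intro exI[where x="Fmap r"] allI conjI ballI)
  fix n
  show "bij_betw (Fmap r n) (carr (HomL r x X) n) (carr (KosX r x X) n)" by (rule F_bij[OF assms])
  show "Fmap r n (a + b) = Fmap r n a + Fmap r n b" if "a \<in> carr (HomL r x X) n" "b \<in> carr (HomL r x X) n" for a b
    by (rule F_add[OF assms that])
  show "Fmap r n (smul (HomL r x X) c a) = smul (KosX r x X) c (Fmap r n a)" if "a \<in> carr (HomL r x X) n" for a c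
    by (rule F_smul[OF assms that])
  show "Fmap r (n + 1) (diff (HomL r x X) n a) = diff (KosX r x X) n (Fmap r n a)" if "a \<in> carr (HomL r x X) n" for a
    by (rule F_diff[OF assms that])
qed


end
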